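(* For every 2-coloring of the edges of $K_{\mathbb{N},\mathbb{N}}$, the vertex set can be partitioned into a finite set and at most two monochromatic paths (each path finite or one-way infinite, each monochromatic in some color).
   Context: $K_{\mathbb{N},\mathbb{N}}$ is the complete bipartite graph on $\mathbb{N}$ whose parts are the even and the odd positive integers. A monochromatic path is a path all of whose edges have the same color. *)

theory Defs
  imports Main
begin

text \<open>Vertices of K_{N,N}: the positive integers; parts are the even and the odd ones.
  Two vertices are adjacent iff both are positive and they have different parity.\<close>
definition KNN_vertices :: "nat set" where
  "KNN_vertices = {n. n \<ge> 1}"

definition KNN_adj :: "nat \<Rightarrow> nat \<Rightarrow> bool" where
  "KNN_adj x y \<longleftrightarrow> x \<ge> 1 \<and> y \<ge> 1 \<and> odd (x + y)"

text \<open>P is (the vertex set of) a monochromatic path of colour col: either a finite path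
  (a list of distinct vertices, consecutive ones adjacent, all edges coloured col;
  the empty list encodes an absent path) or a one-way infinite path.\<close>
definition mono_path :: "(nat set \<Rightarrow> bool) \<Rightarrow> bool \<Rightarrow> nat set \<Rightarrow> bool" where
  "mono_path c col P \<longleftrightarrow>
     (\<exists>xs. P = set xs \<and> distinct xs \<and>
        (\<forall>i. Suc i < length xs \<longrightarrow>
           KNN_adj (xs ! i) (xs ! Suc i) \<and> c {xs ! i, xs ! Suc i} = col))
   \<or> (\<exists>f :: nat \<Rightarrow> nat. inj f \<and> P = range f \<and>
        (\<forall>i. KNN_adj (f i) (f (Suc i)) \<and> c {f i, f (Suc i)} = col))"

end

theory Submission
  imports Defs
begin


lemma my_free_uf:
  "\<exists>U::nat filter. U \<noteq> bot \<and> (\<forall>P. eventually P U \<or> eventually (\<lambda>x. \<not> P x) U)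
     \<and> (\<forall>P. eventually P U \<longrightarrow> infinite {x. P x})"
proof -
  let ?F = "cofinite :: nat filter"
  let ?R = "{(b, a). a \<noteq> (bot::nat filter) \<and> a \<le> b \<and> b \<le> ?F}"
  have bot_notin_R: "c \<in> Chains ?R \<Longrightarrow> bot \<notin> c" for c
    by (auto simp: Chains_def)
  have FneB: "?F \<noteq> bot" by simp
  have [simp]: "Field ?R = {G. G \<noteq> bot \<and> G \<le> ?F}"
    by (auto simp: Field_def bot_unique)
  have "\<exists>m\<in>Field ?R. \<forall>a\<in>Field ?R. (m, a) \<in> ?R \<longrightarrow> a = m"
  proof (rule Zorns_po_lemma)
    show "Partial_order ?R"
      by (auto simp: partial_order_on_def preorder_on_def
          antisym_def refl_on_def trans_def Field_def bot_unique)
    show "\<exists>u\<in>Field ?R. \<forall>a\<in>C. (a, u) \<in> ?R" if C: "C \<in> Chains ?R" for C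
    proof (cases "C = {}")
      case True
      then show ?thesis using FneB by (intro bexI[of _ ?F]) auto
    next
      case False
      have "Inf C = bot \<longleftrightarrow> (\<exists>x\<in>C. x = bot)"
        unfolding trivial_limit_def using C False
        by (intro eventually_Inf_base) (auto simp: Chains_def)
      with C have IC: "Inf C \<noteq> bot" by (simp add: bot_notin_R)
      from False obtain x where "x \<in> C" by auto
      with C have "Inf C \<le> ?F"
        by (auto intro!: Inf_lower2[of x] simp: Chains_def)
      with IC C show ?thesis
        by (auto intro!: bexI[of _ "Inf C"] Inf_lower simp: Chains_def)
    qed
  qed
  then obtain U where UF: "U \<in> Field ?R" and Umax: "\<forall>a\<in>Field ?R. (U, a) \<in> ?R \<longrightarrow> a = U"
    by blast
  have U1: "U \<noteq> bot" "U \<le> ?F" using UF by simp_all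
  have U2: "G = U" if "G \<noteq> bot" "G \<le> ?F" "G \<le> U" for G
    using Umax that U1 by simp
  have ultra: "eventually P U \<or> eventually (\<lambda>x. \<not> P x) U" for P
  proof (rule disjCI)
    assume "\<not> eventually (\<lambda>x. \<not> P x) U"
    then have ne: "inf U (principal {x. P x}) \<noteq> bot"
      by (simp add: trivial_limit_def eventually_inf_principal)
    have le1: "inf U (principal {x. P x}) \<le> ?F"
      using U1(2) inf_le1 order_trans by blast
    have eq: "inf U (principal {x. P x}) = U"
      using U2[OF ne le1 inf_le1] .
    have "eventually P (inf U (principal {x. P x}))"
      by (simp add: eventually_inf_principal)
    then show "eventually P U" by (simp only: eq)
  qed
  have inf: "infinite {x. P x}" if "eventually P U" for P
  proof
    assume fin: "finite {x. P x}"
    then have "eventually (\<lambda>x. \<not> P x) ?F" by (simp add: eventually_cofinite)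
    then have "eventually (\<lambda>x. \<not> P x) U" using U1(2) by (simp add: le_filter_def)
    with that have "eventually (\<lambda>x. False) U" by (auto elim: eventually_rev_mp)
    with U1(1) show False by (simp add: trivial_limit_def)
  qed
  show ?thesis using U1(1) ultra inf by blast
qed



definition E :: "(nat set \<Rightarrow> bool) \<Rightarrow> bool \<Rightarrow> nat \<Rightarrow> nat \<Rightarrow> bool" where
  "E c K x y \<longleftrightarrow> KNN_adj x y \<and> c {x, y} = K"

definition conn :: "(nat set \<Rightarrow> bool) \<Rightarrow> bool \<Rightarrow> nat set \<Rightarrow> nat \<Rightarrow> nat \<Rightarrow> bool" where
  "conn c K X x y \<longleftrightarrow> (\<exists>xs. xs \<noteq> [] \<and> hd xs = x \<and> last xs = y \<and> distinct xs \<and>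
      successively (E c K) xs \<and> set xs \<inter> X = {})"

definition lk :: "(nat set \<Rightarrow> bool) \<Rightarrow> bool \<Rightarrow> nat \<Rightarrow> nat \<Rightarrow> bool" where
  "lk c K x y \<longleftrightarrow> (\<forall>X. finite X \<longrightarrow> x \<notin> X \<longrightarrow> y \<notin> X \<longrightarrow> conn c K X x y)"

definition linked :: "(nat set \<Rightarrow> bool) \<Rightarrow> bool \<Rightarrow> nat set \<Rightarrow> bool" where
  "linked c K S \<longleftrightarrow> (\<forall>x\<in>S. \<forall>y\<in>S. lk c K x y)"

lemma lkD: "lk c K x y \<Longrightarrow> finite X \<Longrightarrow> x \<notin> X \<Longrightarrow> y \<notin> X \<Longrightarrow> conn c K X x y"
  unfolding lk_def by blast

lemma connE:
  assumes "conn c K X x y"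
  obtains xs where "xs \<noteq> []" "hd xs = x" "last xs = y" "distinct xs"
      "successively (E c K) xs" "set xs \<inter> X = {}"
  using assms unfolding conn_def by blast

lemma KNN_adj_sym: "KNN_adj x y = KNN_adj y x"
  unfolding KNN_adj_def by (auto simp: add.commute)

lemma E_sym: "E c K x y = E c K y x"
  unfolding E_def using KNN_adj_sym by (metis insert_commute)

lemma E_neq: "E c K x y \<Longrightarrow> x \<noteq> y"
  unfolding E_def KNN_adj_def by auto

lemma conn_base: "x \<notin> X \<Longrightarrow> conn c K X x x"
  unfolding conn_def by (rule exI[of _ "[x]"]) auto

lemma lk_refl: "lk c K x x"
  unfolding lk_def using conn_base by blast

lemma lk_edge: "E c K x y \<Longrightarrow> lk c K x y"
  unfolding lk_def conn_def using E_neq[of c K x y]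
  by (intro allI impI exI[of _ "[x,y]"]) auto

lemma lk_sym: assumes "lk c K x y" shows "lk c K y x"
  unfolding lk_def
proof (intro allI impI)
  fix X assume X: "finite X" "y \<notin> X" "x \<notin> X"
  have "conn c K X x y" using lkD[OF assms X(1,3,2)] .
  then obtain xs where xs: "xs \<noteq> []" "hd xs = x" "last xs = y" "distinct xs"
      "successively (E c K) xs" "set xs \<inter> X = {}"
    by (rule connE)
  have "successively (E c K) (rev xs)"
  proof -
    have "successively (\<lambda>x y. E c K y x) xs"
      by (rule successively_mono[OF xs(5)]) (metis E_sym)
    then show ?thesis by simp
  qed
  moreover have "hd (rev xs) = y" "last (rev xs) = x"
    using xs by (simp_all add: hd_rev last_rev)
  ultimately show "conn c K X y x" unfolding conn_def
    using xs by (intro exI[of _ "rev xs"]) auto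
qed

lemma conn_ext:
  assumes fin: "finite X" and c1: "conn c K (insert z X) x y" and l: "lk c K y z" and z: "z \<notin> X"
  shows "conn c K X x z"
proof -
  obtain xs where xs: "xs \<noteq> []" "hd xs = x" "last xs = y" "distinct xs"
      "successively (E c K) xs" "set xs \<inter> insert z X = {}"
    using c1 by (rule connE)
  have yxs: "y \<in> set xs" using xs by auto
  let ?X' = "X \<union> (set xs - {y})"
  have "finite ?X'" using fin by simp
  moreover have "y \<notin> ?X'" using xs yxs by auto
  moreover have "z \<notin> ?X'" using xs z by auto
  ultimately have "conn c K ?X' y z" by (rule lkD[OF l])
  then obtain ys where ys: "ys \<noteq> []" "hd ys = y" "last ys = z" "distinct ys"
      "successively (E c K) ys" "set ys \<inter> ?X' = {}"
    by (rule connE)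
  obtain t where ys_eq: "ys = y # t" using ys by (cases ys) auto
  have t_dis: "set t \<inter> set xs = {}" using ys ys_eq by auto
  have "successively (E c K) (xs @ t)"
    using xs(5) ys(5) xs(1,3) ys_eq by (cases t) (auto simp: successively_append_iff)
  moreover have "distinct (xs @ t)" using xs(4) ys(4) ys_eq t_dis by auto
  moreover have "last (xs @ t) = z"
    using ys(3) ys_eq xs(3) by (cases t) auto
  moreover have "hd (xs @ t) = x" using xs by simp
  moreover have "set (xs @ t) \<inter> X = {}" using xs(6) ys(6) ys_eq by auto
  ultimately show ?thesis unfolding conn_def using xs(1) by (intro exI[of _ "xs @ t"]) auto
qed



definition N :: "(nat set \<Rightarrow> bool) \<Rightarrow> bool \<Rightarrow> nat \<Rightarrow> nat set" where
  "N c K x = {y. E c K x y}"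

definition tcls :: "(nat set \<Rightarrow> bool) \<Rightarrow> (nat set \<Rightarrow> bool) \<Rightarrow> nat set \<Rightarrow> bool \<Rightarrow> nat set" where
  "tcls c bQ P K = {x\<in>P. bQ (N c K x)}"

locale bip =
  fixes c :: "nat set \<Rightarrow> bool" and P Q :: "nat set" and bP bQ :: "nat set \<Rightarrow> bool"
  assumes PQ_adj: "\<And>x y. x \<in> P \<Longrightarrow> y \<in> Q \<Longrightarrow> KNN_adj x y"
  and PQ_disj: "P \<inter> Q = {}"
  and PQ_V: "P \<union> Q = KNN_vertices"
  and bP_int: "\<And>S T. bP S \<Longrightarrow> bP T \<Longrightarrow> bP (S \<inter> T)"
  and bP_mono: "\<And>S T. bP S \<Longrightarrow> S \<subseteq> T \<Longrightarrow> bP T"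
  and bP_ultra: "\<And>S. bP S \<or> bP (- S)"
  and bP_P: "bP P"
  and bP_free: "\<And>S X. bP S \<Longrightarrow> finite X \<Longrightarrow> \<exists>x\<in>S \<inter> P. x \<notin> X"
  and bQ_int: "\<And>S T. bQ S \<Longrightarrow> bQ T \<Longrightarrow> bQ (S \<inter> T)"
  and bQ_mono: "\<And>S T. bQ S \<Longrightarrow> S \<subseteq> T \<Longrightarrow> bQ T"
  and bQ_ultra: "\<And>S. bQ S \<or> bQ (- S)"
  and bQ_Q: "bQ Q"
  and bQ_free: "\<And>S X. bQ S \<Longrightarrow> finite X \<Longrightarrow> \<exists>x\<in>S \<inter> Q. x \<notin> X"
begin

lemma swap: "bip Q P bQ bP"
proof (unfold_locales)
  show "KNN_adj x y" if "x \<in> Q" "y \<in> P" for x y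
    using PQ_adj[OF that(2,1)] KNN_adj_sym by simp
  show "Q \<inter> P = {}" using PQ_disj by blast
  show "Q \<union> P = KNN_vertices" using PQ_V by blast
  show "bQ (S \<inter> T)" if "bQ S" "bQ T" for S T using bQ_int that .
  show "bQ T" if "bQ S" "S \<subseteq> T" for S T using bQ_mono that .
  show "bQ S \<or> bQ (- S)" for S by (rule bQ_ultra)
  show "bQ Q" by (rule bQ_Q)
  show "\<exists>x\<in>S \<inter> Q. x \<notin> X" if "bQ S" "finite X" for S X using bQ_free that .
  show "bP (S \<inter> T)" if "bP S" "bP T" for S T using bP_int that .
  show "bP T" if "bP S" "S \<subseteq> T" for S T using bP_mono that .
  show "bP S \<or> bP (- S)" for S by (rule bP_ultra)
  show "bP P" by (rule bP_P)
  show "\<exists>x\<in>S \<inter> P. x \<notin> X" if "bP S" "finite X" for S X using bP_free that .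
qed

lemma bP_inf: "bP S \<Longrightarrow> infinite (S \<inter> P)"
  using bP_free by blast

lemma tcls_sub: "tcls c bQ P K \<subseteq> P"
  unfolding tcls_def by auto

lemma sameP:
  assumes x: "x \<in> tcls c bQ P K" and y: "y \<in> tcls c bQ P K"
  shows "lk c K x y"
  unfolding lk_def
proof (intro allI impI)
  fix X assume X: "finite X" "x \<notin> X" "y \<notin> X"
  show "conn c K X x y"
  proof (cases "x = y")
    case True then show ?thesis using X conn_base by simp
  next
    case False
    have "bQ (N c K x \<inter> N c K y)" using x y bQ_int unfolding tcls_def by auto
    then obtain w where w: "w \<in> N c K x" "w \<in> N c K y" "w \<in> Q" "w \<notin> X"
      using bQ_free[OF _ X(1)] by blast
    have xP: "x \<in> P" and yP: "y \<in> P" using x y tcls_sub by auto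
    have wx: "w \<noteq> x" "w \<noteq> y" using w(3) xP yP PQ_disj by auto
    have c0: "conn c K (insert w (insert y X)) x x"
      by (rule conn_base) (use X False wx in auto)
    have c1: "conn c K (insert y X) x w"
      by (rule conn_ext[OF _ c0]) (use X w wx in \<open>auto simp: N_def intro: lk_edge\<close>)
    show ?thesis
      by (rule conn_ext[OF _ c1]) (use X w in \<open>auto simp: N_def E_sym intro: lk_edge\<close>)
  qed
qed

lemma crossP:
  assumes big: "bP (tcls c bQ P K)" and x: "x \<in> tcls c bQ P K" and y: "y \<in> tcls c bP Q K"
  shows "lk c K x y"
  unfolding lk_def
proof (intro allI impI)
  fix X assume X: "finite X" "x \<notin> X" "y \<notin> X"
  have "bP (N c K y \<inter> tcls c bQ P K)" using y big bP_int unfolding tcls_def by auto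
  then obtain a where a: "a \<in> N c K y" "a \<in> tcls c bQ P K" "a \<notin> insert x X"
    using bP_free[of _ "insert x X"] X(1) by blast
  have xP: "x \<in> P" and yQ: "y \<in> Q" using x y unfolding tcls_def by auto
  have aP: "a \<in> P" using a(2) unfolding tcls_def by auto
  have c0: "conn c K (insert a (insert y X)) x x"
    by (rule conn_base) (use X a xP yQ PQ_disj in auto)
  have c1: "conn c K (insert y X) x a"
    by (rule conn_ext[OF _ c0]) (use X a aP yQ PQ_disj sameP x in auto)
  show "conn c K X x y"
    by (rule conn_ext[OF _ c1]) (use X a in \<open>auto simp: N_def E_sym intro: lk_edge\<close>)
qed

lemma tcls_cover: assumes "x \<in> P" shows "x \<in> tcls c bQ P K \<or> x \<in> tcls c bQ P (\<not> K)"
proof -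
  have "bQ (N c K x) \<or> bQ (- N c K x)" by (rule bQ_ultra)
  moreover have "- N c K x \<inter> Q \<subseteq> N c (\<not> K) x"
    using PQ_adj[OF assms] unfolding N_def E_def by auto
  ultimately have "bQ (N c K x) \<or> bQ (N c (\<not> K) x)"
    using bQ_int[OF _ bQ_Q] bQ_mono by blast
  then show ?thesis using assms unfolding tcls_def by auto
qed

lemma tcls_big: "bP (tcls c bQ P K) \<or> bP (tcls c bQ P (\<not> K))"
proof -
  have "- tcls c bQ P K \<inter> P \<subseteq> tcls c bQ P (\<not> K)" using tcls_cover by blast
  then show ?thesis using bP_ultra[of "tcls c bQ P K"] bP_int[OF _ bP_P] bP_mono by blast
qed

end

lemma sameQ: "bip P Q bP bQ \<Longrightarrow> x \<in> tcls c bP Q K \<Longrightarrow> y \<in> tcls c bP Q K \<Longrightarrow> lk c K x y"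
  using bip.sameP[OF bip.swap] by blast

lemma linked_typ:
  assumes B: "bip P Q bP bQ" and big: "bP (tcls c bQ P K)"
  shows "linked c K (tcls c bQ P K \<union> tcls c bP Q K)"
  unfolding linked_def
  using bip.sameP[OF B] sameQ[OF B] bip.crossP[OF B big] lk_sym by blast



lemma sameP_linked: "bip P Q bP bQ \<Longrightarrow> linked c K (tcls c bQ P K)"
  unfolding linked_def using bip.sameP by blast

lemma sameQ_linked: "bip P Q bP bQ \<Longrightarrow> linked c K (tcls c bP Q K)"
  unfolding linked_def using sameQ by blast

lemma comb_main:
  assumes B: "bip P Q bP bQ"
  shows "\<exists>F S1 S2 K1 K2. finite F \<and> infinite S1 \<and> infinite S2 \<and> linked c K1 S1 \<and>
     linked c K2 S2 \<and> S1 \<subseteq> KNN_vertices \<and> S2 \<subseteq> KNN_vertices \<and>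
     KNN_vertices \<subseteq> F \<union> S1 \<union> S2"
proof -
  interpret bip c P Q bP bQ by (rule B)
  have B': "bip Q P bQ bP" by (rule swap)
  interpret sw: bip c Q P bQ bP by (rule B')
  obtain K where bigK: "bP (tcls c bQ P K)"
    using tcls_big by blast
  define AK where "AK = tcls c bQ P K"
  define BK where "BK = tcls c bP Q K"
  define AL where "AL = tcls c bQ P (\<not> K)"
  define BL where "BL = tcls c bP Q (\<not> K)"
  have subs: "AK \<subseteq> P" "AL \<subseteq> P" "BK \<subseteq> Q" "BL \<subseteq> Q"
    unfolding AK_def AL_def BK_def BL_def tcls_def by auto
  have PV: "P \<subseteq> KNN_vertices" "Q \<subseteq> KNN_vertices" using PQ_V by auto
  have cov: "KNN_vertices \<subseteq> AK \<union> BK \<union> AL \<union> BL"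
    using tcls_cover sw.tcls_cover PQ_V unfolding AK_def AL_def BK_def BL_def by blast
  have S1l: "linked c K (AK \<union> BK)"
    unfolding AK_def BK_def by (rule linked_typ[OF B bigK])
  have AKinf: "infinite AK" using bP_inf[OF bigK] unfolding AK_def by auto
  have S1inf: "infinite (AK \<union> BK)" using AKinf by auto
  have S1V: "AK \<union> BK \<subseteq> KNN_vertices" using subs PV by auto
  show ?thesis
  proof (cases "bQ BL")
    case True
    have l2: "linked c (\<not> K) (BL \<union> AL)"
      unfolding AL_def BL_def using linked_typ[OF B'] True BL_def by blast
    have "infinite BL" using sw.bP_inf[OF True] by auto
    then show ?thesis using S1l l2 S1inf S1V subs PV cov
      by (intro exI[of _ "{}"] exI[of _ "AK \<union> BK"] exI[of _ "BL \<union> AL"] exI[of _ K] exI[of _ "\<not> K"]) auto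
  next
    case False
    have lAL: "linked c (\<not> K) AL" unfolding AL_def by (rule sameP_linked[OF B])
    have lBL: "linked c (\<not> K) BL" unfolding BL_def by (rule sameQ_linked[OF B])
    show ?thesis
    proof (cases "finite AL")
      case fA: True
      show ?thesis
      proof (cases "finite BL")
        case True
        then show ?thesis using fA S1l S1inf S1V cov
          by (intro exI[of _ "AL \<union> BL"] exI[of _ "AK \<union> BK"] exI[of _ "AK \<union> BK"] exI[of _ K] exI[of _ K]) auto
      next
        case False
        then show ?thesis using fA S1l S1inf S1V cov lBL subs PV
          by (intro exI[of _ "AL"] exI[of _ "AK \<union> BK"] exI[of _ "BL"] exI[of _ K] exI[of _ "\<not> K"]) auto
      qed
    next
      case iA: False
      show ?thesis
      proof (cases "finite BL")
        case True
        then show ?thesis using iA S1l S1inf S1V cov lAL subs PV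
          by (intro exI[of _ "BL"] exI[of _ "AK \<union> BK"] exI[of _ "AL"] exI[of _ K] exI[of _ "\<not> K"]) auto
      next
        case iB: False
        show ?thesis
        proof (cases "\<forall>X. finite X \<longrightarrow> (\<exists>a b. a \<in> AL \<and> b \<in> BL \<and> a \<notin> X \<and> b \<notin> X \<and> E c (\<not> K) a b)")
          case True
          have "lk c (\<not> K) a b" if a: "a \<in> AL" and b: "b \<in> BL" for a b
            unfolding lk_def
          proof (intro allI impI)
            fix X assume X: "finite X" "a \<notin> X" "b \<notin> X"
            obtain a' b' where e: "a' \<in> AL" "b' \<in> BL" "a' \<notin> insert a (insert b X)"
                "b' \<notin> insert a (insert b X)" "E c (\<not> K) a' b'"
              using True X(1) by (meson finite.insertI)
            have aP: "a \<in> P" "a' \<in> P" and bQ: "b \<in> Q" "b' \<in> Q" using a b e subs by auto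
            have c0: "conn c (\<not> K) (insert a' (insert b' (insert b X))) a a"
              by (rule conn_base) (use X e aP bQ PQ_disj in auto)
            have c1: "conn c (\<not> K) (insert b' (insert b X)) a a'"
              by (rule conn_ext[OF _ c0]) (use X e aP bQ PQ_disj lAL a in \<open>auto simp: linked_def\<close>)
            have c2: "conn c (\<not> K) (insert b X) a b'"
              by (rule conn_ext[OF _ c1]) (use X e in \<open>auto intro: lk_edge\<close>)
            show "conn c (\<not> K) X a b"
              by (rule conn_ext[OF _ c2]) (use X e lBL b in \<open>auto simp: linked_def\<close>)
          qed
          then have "linked c (\<not> K) (AL \<union> BL)"
            using lAL lBL lk_sym unfolding linked_def by blast
          then show ?thesis using iA S1l S1inf S1V cov subs PV
            by (intro exI[of _ "{}"] exI[of _ "AK \<union> BK"] exI[of _ "AL \<union> BL"] exI[of _ K] exI[of _ "\<not> K"]) auto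
        next
          case False
          then obtain X0 where X0: "finite X0"
            and noE: "\<And>a b. a \<in> AL \<Longrightarrow> b \<in> BL \<Longrightarrow> a \<notin> X0 \<Longrightarrow> b \<notin> X0 \<Longrightarrow> \<not> E c (\<not> K) a b"
            by blast
          have EK: "E c K a b" if "a \<in> AL - X0" "b \<in> BL - X0" for a b
            using noE[of a b] that subs PQ_adj[of a b] unfolding E_def by auto
          have EK': "E c K b a" if "a \<in> AL - X0" "b \<in> BL - X0" for a b
            using EK[OF that] E_sym by blast
          let ?S = "(AL - X0) \<union> (BL - X0)"
          have l2: "linked c K ?S"
            unfolding linked_def
          proof (intro ballI)
            fix x y assume x: "x \<in> ?S" and y: "y \<in> ?S"
            show "lk c K x y" unfolding lk_def
            proof (intro allI impI)
              fix X assume X: "finite X" "x \<notin> X" "y \<notin> X"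
              show "conn c K X x y"
              proof (cases "x = y")
                case True then show ?thesis using X conn_base by simp
              next
                case xy: False
                show ?thesis
                proof (cases "x \<in> AL - X0")
                  case xA: True
                  show ?thesis
                  proof (cases "y \<in> AL - X0")
                    case yA: True
                    have "infinite (BL - X0)" using iB X0 by auto
                    then obtain w where w: "w \<in> BL - X0" "w \<notin> X" using X(1)
                      by (meson finite_subset infinite_super subsetI Diff_iff)
                    have wn: "w \<noteq> x" "w \<noteq> y" using w xA yA subs PQ_disj by auto
                    have c0: "conn c K (insert w (insert y X)) x x"
                      by (rule conn_base) (use X xy wn in auto)
                    have c1: "conn c K (insert y X) x w"
                      by (rule conn_ext[OF _ c0]) (use X w wn EK xA in \<open>auto intro: lk_edge\<close>)
                    show ?thesis
                      by (rule conn_ext[OF _ c1]) (use X w EK' yA in \<open>auto intro: lk_edge\<close>)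
                  next
                    case False
                    then have "y \<in> BL - X0" using y by auto
                    then have "E c K x y" using EK xA by blast
                    then show ?thesis using lk_edge X unfolding lk_def by blast
                  qed
                next
                  case xB': False
                  then have xB: "x \<in> BL - X0" using x by auto
                  show ?thesis
                  proof (cases "y \<in> BL - X0")
                    case yB: True
                    have "infinite (AL - X0)" using iA X0 by auto
                    then obtain w where w: "w \<in> AL - X0" "w \<notin> X" using X(1)
                      by (meson finite_subset infinite_super subsetI Diff_iff)
                    have wn: "w \<noteq> x" "w \<noteq> y" using w xB yB subs PQ_disj by auto
                    have c0: "conn c K (insert w (insert y X)) x x"
                      by (rule conn_base) (use X xy wn in auto)
                    have c1: "conn c K (insert y X) x w"
                      by (rule conn_ext[OF _ c0]) (use X w wn EK' xB in \<open>auto intro: lk_edge\<close>)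
                    show ?thesis
                      by (rule conn_ext[OF _ c1]) (use X w EK yB in \<open>auto intro: lk_edge\<close>)
                  next
                    case False
                    then have "y \<in> AL - X0" using y by auto
                    then have "E c K x y" using EK' xB by blast
                    then show ?thesis using lk_edge X unfolding lk_def by blast
                  qed
                qed
              qed
            qed
          qed
          have "infinite ?S" using iA X0 by auto
          then show ?thesis using S1l S1inf S1V cov subs PV l2 X0
            by (intro exI[of _ "X0"] exI[of _ "AK \<union> BK"] exI[of _ ?S] exI[of _ K] exI[of _ K]) auto
        qed
      qed
    qed
  qed
qed



lemma prefix_le:
  assumes pre: "\<And>n. \<exists>ys. L (Suc n) = L n @ ys" and le: "n \<le> m"
  shows "\<exists>ys. L m = L n @ ys"
  using le
proof (induction m rule: dec_induct)
  case base then show ?case by (rule exI[of _ "[]"]) simp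
next
  case (step k)
  then obtain ys where "L k = L n @ ys" by blast
  moreover obtain zs where "L (Suc k) = L k @ zs" using pre by blast
  ultimately show ?case by auto
qed

lemma nth_stable:
  assumes pre: "\<And>n. \<exists>ys. L (Suc n) = L n @ ys" and len: "\<And>n. n < length (L n)"
    and i: "i < length (L n)"
  shows "L n ! i = L i ! i"
proof (cases "n \<le> i")
  case True
  then obtain ys where "L i = L n @ ys" using prefix_le[of L, OF pre] by blast
  then show ?thesis using i by (simp add: nth_append)
next
  case False
  then obtain ys where "L n = L i @ ys" using prefix_le[of L, OF pre, of i n] by auto
  then show ?thesis using len[of i] by (simp add: nth_append)
qed

lemma seq_mono_path:
  assumes pre: "\<And>n. \<exists>ys. L (Suc n) = L n @ ys" and len: "\<And>n. n < length (L n)"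
    and dist: "\<And>n. distinct (L n)" and suc: "\<And>n. successively (E c K) (L n)"
  shows "mono_path c K (\<Union>n. set (L n))"
proof -
  define f where "f i = L i ! i" for i
  have st: "L n ! i = f i" if "i < length (L n)" for n i
    using nth_stable[OF pre len that] unfolding f_def by simp
  have "inj f"
  proof (rule injI)
    fix i j assume eq: "f i = f j"
    define m where "m = max i j"
    have "i < length (L m)" "j < length (L m)"
      using len[of m] unfolding m_def by (auto simp: max_def)
    then show "i = j" using eq st[of i m] st[of j m] dist[of m] nth_eq_iff_index_eq by metis
  qed
  moreover have "(\<Union>n. set (L n)) = range f"
  proof
    show "(\<Union>n. set (L n)) \<subseteq> range f"
    proof
      fix x assume "x \<in> (\<Union>n. set (L n))"
      then obtain n where "x \<in> set (L n)" by blast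
      then obtain i where "i < length (L n)" "x = L n ! i" by (metis in_set_conv_nth)
      then show "x \<in> range f" using st by auto
    qed
    show "range f \<subseteq> (\<Union>n. set (L n))"
      using len unfolding f_def by auto
  qed
  moreover have "KNN_adj (f i) (f (Suc i)) \<and> c {f i, f (Suc i)} = K" for i
  proof -
    have l: "Suc i < length (L (Suc i))" using len by blast
    have "E c K (L (Suc i) ! i) (L (Suc i) ! Suc i)"
      by (rule successively_nth[OF suc l])
    then show ?thesis using st[of i "Suc i"] st[of "Suc i" "Suc i"] l unfolding E_def by simp
  qed
  ultimately show ?thesis unfolding mono_path_def by blast
qed

definition pth :: "(nat set \<Rightarrow> bool) \<Rightarrow> bool \<Rightarrow> nat set \<Rightarrow> nat \<Rightarrow> nat \<Rightarrow> nat list \<Rightarrow> bool" where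
  "pth c K X x y xs \<longleftrightarrow> xs \<noteq> [] \<and> hd xs = x \<and> last xs = y \<and> distinct xs \<and>
      successively (E c K) xs \<and> set xs \<inter> X = {}"

definition ext :: "(nat set \<Rightarrow> bool) \<Rightarrow> bool \<Rightarrow> nat list \<Rightarrow> nat \<Rightarrow> nat set \<Rightarrow> nat list" where
  "ext c K L t Y = L @ tl (SOME xs. pth c K Y (last L) t xs)"

lemma ext_ok:
  assumes L: "L \<noteq> []" "distinct L" "successively (E c K) L"
    and l: "lk c K (last L) t" and t: "t \<notin> set L" "t \<notin> Y" and Y: "finite Y" "set L \<inter> Y = {}"
    and L': "L' = ext c K L t (Y \<union> (set L - {last L}))"
  shows "L' \<noteq> [] \<and> distinct L' \<and> successively (E c K) L' \<and> last L' = t \<and> set L' \<inter> Y = {}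
     \<and> (\<exists>ys. L' = L @ ys) \<and> length L < length L' \<and> t \<in> set L'"
proof -
  let ?X = "Y \<union> (set L - {last L})"
  have lL: "last L \<in> set L" using L by simp
  have "conn c K ?X (last L) t"
    by (rule lkD[OF l]) (use Y t lL in auto)
  then have ex: "\<exists>xs. pth c K ?X (last L) t xs" unfolding conn_def pth_def by blast
  define xs where "xs = (SOME xs. pth c K ?X (last L) t xs)"
  have xs: "pth c K ?X (last L) t xs" unfolding xs_def by (rule someI_ex[OF ex])
  have L'eq: "L' = L @ tl xs" unfolding L' ext_def xs_def ..
  obtain u where xsu: "xs = last L # u" using xs unfolding pth_def by (cases xs) auto
  have tneq: "t \<noteq> last L" using t lL by auto
  have une: "u \<noteq> []" using xs xsu tneq unfolding pth_def by auto
  have tlast: "last u = t" using xs xsu une unfolding pth_def by simp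
  have udis: "set u \<inter> set L = {}" using xs xsu unfolding pth_def by auto
  have uY: "set u \<inter> Y = {}" using xs xsu unfolding pth_def by auto
  have s1: "successively (E c K) (L @ u)"
    using L(3) xs xsu une L(1) unfolding pth_def
    by (cases u) (auto simp: successively_append_iff)
  have d: "distinct (L @ u)" using L(2) xs xsu udis unfolding pth_def by auto
  show ?thesis unfolding L'eq xsu using L une tlast udis uY s1 d Y(2)
    by (auto simp: last_in_set)
qed



definition nxt :: "nat set \<Rightarrow> nat set \<Rightarrow> nat" where
  "nxt S Y = (LEAST v. v \<in> S \<and> v \<notin> Y)"

lemma nxt_in: assumes "infinite S" "finite Y" shows "nxt S Y \<in> S" "nxt S Y \<notin> Y"
proof -
  have "\<exists>v. v \<in> S \<and> v \<notin> Y" using assms by (meson finite_subset subsetI)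
  then have "nxt S Y \<in> S \<and> nxt S Y \<notin> Y" unfolding nxt_def by (rule LeastI_ex)
  then show "nxt S Y \<in> S" "nxt S Y \<notin> Y" by auto
qed

lemma nxt_le: "v \<in> S \<Longrightarrow> v \<notin> Y \<Longrightarrow> nxt S Y \<le> v"
  unfolding nxt_def by (rule Least_le) simp

locale cons =
  fixes c :: "nat set \<Rightarrow> bool" and K1 K2 :: bool and S1 S2 F :: "nat set"
  assumes finF: "finite F" and inf1: "infinite S1" and inf2: "infinite S2"
    and l1: "linked c K1 S1" and l2: "linked c K2 S2"
    and cov: "KNN_vertices \<subseteq> F \<union> S1 \<union> S2"
begin

definition "W = insert 0 F"

definition "t1 L1 L2 = nxt S1 (W \<union> set L1 \<union> set L2)"
definition "e1 L1 L2 = ext c K1 L1 (t1 L1 L2) ((W \<union> set L2) \<union> (set L1 - {last L1}))"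
definition "t2 L1 L2 = nxt S2 (W \<union> set (e1 L1 L2) \<union> set L2)"
definition "e2 L1 L2 = ext c K2 L2 (t2 L1 L2) ((W \<union> set (e1 L1 L2)) \<union> (set L2 - {last L2}))"

definition "good L1 L2 \<longleftrightarrow> L1 \<noteq> [] \<and> L2 \<noteq> [] \<and> distinct L1 \<and> distinct L2 \<and> set L1 \<inter> set L2 = {}
  \<and> successively (E c K1) L1 \<and> successively (E c K2) L2 \<and> last L1 \<in> S1 \<and> last L2 \<in> S2
  \<and> set L1 \<inter> W = {} \<and> set L2 \<inter> W = {}"

primrec st :: "nat \<Rightarrow> nat list \<times> nat list" where
  "st 0 = ([nxt S1 W], [nxt S2 (insert (nxt S1 W) W)])"
| "st (Suc n) = (e1 (fst (st n)) (snd (st n)), e2 (fst (st n)) (snd (st n)))"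

lemma finW: "finite W" unfolding W_def using finF by simp

lemma step:
  assumes I: "good L1 L2"
  shows "good (e1 L1 L2) (e2 L1 L2) \<and> (\<exists>ys. e1 L1 L2 = L1 @ ys) \<and> (\<exists>ys. e2 L1 L2 = L2 @ ys)
    \<and> length L1 < length (e1 L1 L2) \<and> length L2 < length (e2 L1 L2)
    \<and> t1 L1 L2 \<in> set (e1 L1 L2) \<and> t2 L1 L2 \<in> set (e2 L1 L2)"
proof -
  have t1: "t1 L1 L2 \<in> S1" "t1 L1 L2 \<notin> W \<union> set L1 \<union> set L2"
    unfolding t1_def using nxt_in[OF inf1, of "W \<union> set L1 \<union> set L2"] finW by auto
  have lk1: "lk c K1 (last L1) (t1 L1 L2)" using l1 t1 I unfolding linked_def good_def by blast
  have E1: "e1 L1 L2 \<noteq> [] \<and> distinct (e1 L1 L2) \<and> successively (E c K1) (e1 L1 L2) \<and>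
      last (e1 L1 L2) = t1 L1 L2 \<and> set (e1 L1 L2) \<inter> (W \<union> set L2) = {}
     \<and> (\<exists>ys. e1 L1 L2 = L1 @ ys) \<and> length L1 < length (e1 L1 L2) \<and> t1 L1 L2 \<in> set (e1 L1 L2)"
    by (rule ext_ok[OF _ _ _ lk1]) (use I t1 finW in \<open>auto simp: good_def e1_def\<close>)
  have t2: "t2 L1 L2 \<in> S2" "t2 L1 L2 \<notin> W \<union> set (e1 L1 L2) \<union> set L2"
    unfolding t2_def using nxt_in[OF inf2, of "W \<union> set (e1 L1 L2) \<union> set L2"] finW by auto
  have lk2: "lk c K2 (last L2) (t2 L1 L2)" using l2 t2 I unfolding linked_def good_def by blast
  have E2: "e2 L1 L2 \<noteq> [] \<and> distinct (e2 L1 L2) \<and> successively (E c K2) (e2 L1 L2) \<and>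
      last (e2 L1 L2) = t2 L1 L2 \<and> set (e2 L1 L2) \<inter> (W \<union> set (e1 L1 L2)) = {}
     \<and> (\<exists>ys. e2 L1 L2 = L2 @ ys) \<and> length L2 < length (e2 L1 L2) \<and> t2 L1 L2 \<in> set (e2 L1 L2)"
    by (rule ext_ok[OF _ _ _ lk2]) (use I t2 finW E1 in \<open>auto simp: good_def e2_def\<close>)
  show ?thesis using E1 E2 t1 t2 unfolding good_def by auto
qed

lemma good_st: "good (fst (st n)) (snd (st n))"
proof (induction n)
  case 0
  let ?a = "nxt S1 W" let ?b = "nxt S2 (insert (nxt S1 W) W)"
  have "?a \<in> S1" "?a \<notin> W" using nxt_in[OF inf1 finW] by auto
  moreover have fi: "finite (insert ?a W)" using finW by simp
  moreover have "?b \<in> S2" "?b \<notin> insert ?a W" using nxt_in[OF inf2 fi] by auto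
  ultimately show ?case unfolding good_def by auto
next
  case (Suc n) then show ?case using step by simp
qed

abbreviation "A1 n \<equiv> fst (st n)"
abbreviation "A2 n \<equiv> snd (st n)"

lemma pre1: "\<exists>ys. A1 (Suc n) = A1 n @ ys" using step[OF good_st[of n]] by simp
lemma pre2: "\<exists>ys. A2 (Suc n) = A2 n @ ys" using step[OF good_st[of n]] by simp

lemma len1: "n < length (A1 n)"
proof (induction n)
  case 0 then show ?case by simp
next
  case (Suc n) then show ?case using step[OF good_st[of n]] by simp
qed

lemma len2: "n < length (A2 n)"
proof (induction n)
  case 0 then show ?case by simp
next
  case (Suc n) then show ?case using step[OF good_st[of n]] by simp
qed

definition "C n = set (A1 n) \<union> set (A2 n)"

lemma C_mono: "n \<le> m \<Longrightarrow> C n \<subseteq> C m"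
proof -
  assume "n \<le> m"
  moreover have "C k \<le> C (Suc k)" for k
    using pre1[of k] pre2[of k] unfolding C_def by auto
  ultimately show "C n \<subseteq> C m" using lift_Suc_mono_le[of C] by blast
qed

lemma covered:
  assumes v: "v \<in> S1 \<union> S2" "v \<notin> W"
  shows "\<exists>n. v \<in> C n"
proof (rule ccontr)
  assume nc: "\<not> (\<exists>n. v \<in> C n)"
  show False
  proof (cases "v \<in> S1")
    case True
    define g where "g n = t1 (A1 n) (A2 n)" for n
    have gle: "g n \<le> v" for n
      unfolding g_def t1_def using nc True v(2) by (intro nxt_le) (auto simp: C_def)
    have gin: "g n \<in> C (Suc n)" for n
      using step[OF good_st[of n]] unfolding g_def C_def by simp
    have gout: "g n \<notin> C n" for n
      using nxt_in(2)[OF inf1, of "W \<union> set (A1 n) \<union> set (A2 n)"] finW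
      unfolding g_def t1_def C_def by auto
    have "inj g"
    proof (rule injI)
      fix n m assume eq: "g n = g m"
      show "n = m"
      proof (rule ccontr)
        assume "n \<noteq> m"
        then have "n < m \<or> m < n" by arith
        then show False
        proof
          assume "n < m"
          then have "g n \<in> C m" using gin[of n] C_mono[of "Suc n" m] by auto
          then show False using gout[of m] eq by simp
        next
          assume "m < n"
          then have "g m \<in> C n" using gin[of m] C_mono[of "Suc m" n] by auto
          then show False using gout[of n] eq by simp
        qed
      qed
    qed
    moreover have "range g \<subseteq> {..v}" using gle by auto
    ultimately have "finite (UNIV :: nat set)"
      using finite_imageD[of g UNIV] finite_subset by (metis finite_atMost inj_on_subset subset_UNIV)
    then show False by simp
  next
    case False
    then have vS2: "v \<in> S2" using v by auto
    define D where "D n = W \<union> set (e1 (A1 n) (A2 n)) \<union> set (A2 n)" for n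
    define g where "g n = t2 (A1 n) (A2 n)" for n
    have DC: "C n \<subseteq> D n" "D n \<subseteq> W \<union> C (Suc n)" for n
      using step[OF good_st[of n]] unfolding D_def C_def by auto
    have gle: "g n \<le> v" for n
    proof -
      have "v \<notin> D n" using DC(2)[of n] nc v(2) by auto
      then show ?thesis unfolding g_def t2_def D_def[symmetric] by (rule nxt_le[OF vS2])
    qed
    have gin: "g n \<in> C (Suc n)" for n
      using step[OF good_st[of n]] unfolding g_def C_def by simp
    have gout: "g n \<notin> C n" for n
      using nxt_in(2)[OF inf2, of "D n"] finW DC(1)[of n]
      unfolding g_def t2_def D_def by auto
    have "inj g"
    proof (rule injI)
      fix n m assume eq: "g n = g m"
      show "n = m"
      proof (rule ccontr)
        assume "n \<noteq> m"
        then have "n < m \<or> m < n" by arith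
        then show False
        proof
          assume "n < m"
          then have "g n \<in> C m" using gin[of n] C_mono[of "Suc n" m] by auto
          then show False using gout[of m] eq by simp
        next
          assume "m < n"
          then have "g m \<in> C n" using gin[of m] C_mono[of "Suc m" n] by auto
          then show False using gout[of n] eq by simp
        qed
      qed
    qed
    moreover have "range g \<subseteq> {..v}" using gle by auto
    ultimately have "finite (UNIV :: nat set)"
      using finite_imageD[of g UNIV] finite_subset by (metis finite_atMost inj_on_subset subset_UNIV)
    then show False by simp
  qed
qed

lemma result:
  "\<exists>F' P1 P2. finite F' \<and> mono_path c K1 P1 \<and> mono_path c K2 P2 \<and>
     F' \<inter> P1 = {} \<and> F' \<inter> P2 = {} \<and> P1 \<inter> P2 = {} \<and> F' \<union> P1 \<union> P2 = KNN_vertices"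
proof -
  define P1 where "P1 = (\<Union>n. set (A1 n))"
  define P2 where "P2 = (\<Union>n. set (A2 n))"
  have m1: "mono_path c K1 P1" unfolding P1_def
    by (rule seq_mono_path[OF pre1 len1]) (use good_st in \<open>auto simp: good_def\<close>)
  have m2: "mono_path c K2 P2" unfolding P2_def
    by (rule seq_mono_path[OF pre2 len2]) (use good_st in \<open>auto simp: good_def\<close>)
  have dis: "P1 \<inter> P2 = {}"
  proof (rule ccontr)
    assume "P1 \<inter> P2 \<noteq> {}"
    then obtain x n m where x: "x \<in> set (A1 n)" "x \<in> set (A2 m)" unfolding P1_def P2_def by blast
    have "x \<in> set (A1 (max n m))" "x \<in> set (A2 (max n m))"
      using x prefix_le[of A1, OF pre1, of n "max n m"] prefix_le[of A2, OF pre2, of m "max n m"] by auto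
    then show False using good_st[of "max n m"] unfolding good_def by auto
  qed
  have PW: "(P1 \<union> P2) \<inter> W = {}" using good_st unfolding P1_def P2_def good_def by blast
  have PV: "P1 \<union> P2 \<subseteq> KNN_vertices" using PW unfolding W_def KNN_vertices_def by (auto simp: Suc_le_eq)
  have covV: "KNN_vertices - F \<subseteq> P1 \<union> P2"
  proof
    fix v assume v: "v \<in> KNN_vertices - F"
    then have "v \<in> S1 \<union> S2" "v \<notin> W" using cov unfolding W_def KNN_vertices_def by auto
    then obtain n where "v \<in> C n" using covered by blast
    then show "v \<in> P1 \<union> P2" unfolding C_def P1_def P2_def by blast
  qed
  define F' where "F' = KNN_vertices - (P1 \<union> P2)"
  have "F' \<subseteq> F" using covV unfolding F'_def by auto
  then have "finite F'" using finF by (rule finite_subset)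
  then show ?thesis using m1 m2 dis PV unfolding F'_def
    by (intro exI[of _ F'] exI[of _ P1] exI[of _ P2]) (auto simp: F'_def)
qed

end



lemma free_aux:
  fixes h :: "nat \<Rightarrow> nat"
  assumes inj: "inj h" and inf: "infinite {n. h n \<in> S}" and X: "finite X"
  shows "\<exists>n. h n \<in> S \<and> h n \<notin> X"
proof -
  have "finite (h -` X)" using finite_vimageI[OF X inj] .
  then have "infinite ({n. h n \<in> S} - h -` X)" using inf by (meson Diff_infinite_finite)
  then obtain n where "n \<in> {n. h n \<in> S} - h -` X" using infinite_imp_nonempty by blast
  then show ?thesis by auto
qed

lemma bip_exists: "\<exists>P Q bP bQ. bip P Q bP bQ"
proof -
  obtain U :: "nat filter" where U: "U \<noteq> bot" "\<And>P. eventually P U \<or> eventually (\<lambda>x. \<not> P x) U"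
     "\<And>P. eventually P U \<Longrightarrow> infinite {x. P x}"
    using my_free_uf by blast
  define P :: "nat set" where "P = {n. even n \<and> n \<noteq> 0}"
  define Q :: "nat set" where "Q = {n. odd n}"
  define bP where "bP S = eventually (\<lambda>n. 2*n+2 \<in> S) U" for S
  define bQ where "bQ S = eventually (\<lambda>n. 2*n+1 \<in> S) U" for S
  have injP: "inj (\<lambda>n::nat. 2*n+2)" by (rule injI) simp
  have injQ: "inj (\<lambda>n::nat. 2*n+1)" by (rule injI) simp
  have "bip P Q bP bQ"
  proof (unfold_locales)
    show "KNN_adj x y" if "x \<in> P" "y \<in> Q" for x y
      using that unfolding P_def Q_def KNN_adj_def by (auto simp: Suc_le_eq odd_pos)
    show "P \<inter> Q = {}" unfolding P_def Q_def by auto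
    show "P \<union> Q = KNN_vertices" unfolding P_def Q_def KNN_vertices_def by (auto simp: Suc_le_eq odd_pos)
    show "bP (S \<inter> T)" if "bP S" "bP T" for S T
      using that unfolding bP_def by (simp add: eventually_conj)
    show "bP T" if "bP S" "S \<subseteq> T" for S T
      using that unfolding bP_def by (auto elim: eventually_mono)
    show "bP S \<or> bP (- S)" for S using U(2)[of "\<lambda>n. 2*n+2 \<in> S"] unfolding bP_def by simp
    show "bP P" unfolding bP_def P_def by simp
    show "\<exists>x\<in>S \<inter> P. x \<notin> X" if a: "bP S" "finite X" for S X
    proof -
      have "infinite {n. 2*n+2 \<in> S}" using U(3) a(1) unfolding bP_def by blast
      then obtain n where "2*n+2 \<in> S" "2*n+2 \<notin> X" using free_aux[OF injP _ a(2)] by blast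
      then show ?thesis unfolding P_def by (intro bexI[of _ "2*n+2"]) auto
    qed
    show "bQ (S \<inter> T)" if "bQ S" "bQ T" for S T
      using that unfolding bQ_def by (simp add: eventually_conj)
    show "bQ T" if "bQ S" "S \<subseteq> T" for S T
      using that unfolding bQ_def by (auto elim: eventually_mono)
    show "bQ S \<or> bQ (- S)" for S using U(2)[of "\<lambda>n. 2*n+1 \<in> S"] unfolding bQ_def by simp
    show "bQ Q" unfolding bQ_def Q_def by simp
    show "\<exists>x\<in>S \<inter> Q. x \<notin> X" if a: "bQ S" "finite X" for S X
    proof -
      have "infinite {n. 2*n+1 \<in> S}" using U(3) a(1) unfolding bQ_def by blast
      then obtain n where "2*n+1 \<in> S" "2*n+1 \<notin> X" using free_aux[OF injQ _ a(2)] by blast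
      then show ?thesis unfolding Q_def by (intro bexI[of _ "2*n+1"]) auto
    qed
  qed
  then show ?thesis by blast
qed

theorem mainTheorem7:
  fixes c :: "nat set \<Rightarrow> bool"
  shows "\<exists>F P1 P2 col1 col2. finite F \<and> mono_path c col1 P1 \<and> mono_path c col2 P2 \<and>
           F \<inter> P1 = {} \<and> F \<inter> P2 = {} \<and> P1 \<inter> P2 = {} \<and>
           F \<union> P1 \<union> P2 = KNN_vertices"
proof -
  obtain P Q bP bQ where B: "bip P Q bP bQ" using bip_exists by blast
  obtain F S1 S2 K1 K2 where H: "finite F" "infinite S1" "infinite S2" "linked c K1 S1"
     "linked c K2 S2" "KNN_vertices \<subseteq> F \<union> S1 \<union> S2"
    using comb_main[OF B, of c] by blast
  interpret cons c K1 K2 S1 S2 F by unfold_locales (use H in auto)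
  show ?thesis using result by blast
qed


end
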